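(* Let $\ell\ge 3$ and let $\mathbf{C}$ be a real $\ell\times\ell$ matrix of the following form. Its first row is $(\alpha,\beta',0,\ldots,0,\beta')$ and its first column is $(\alpha,\beta,0,\ldots,0,\beta)^T$. The trailing $(\ell-1)\times(\ell-1)$ block $\mathbf{S}$ (rows and columns $2,\ldots,\ell$ of $\mathbf{C}$, indexed $1,\ldots,\ell-1$) is tridiagonal with - $\mathbf{S}_{k,k}=\alpha_k$ for $1\le k\le \ell-1$, where $\alpha_k=\alpha_{\ell-k}$; - $\mathbf{S}_{k,k+1}=\beta_k$ and $\mathbf{S}_{k+1,k}=\beta_{\ell-1-k}$ for $1\le k\le \ell-2$. Here $\alpha,\beta,\beta',\alpha_k,\beta_k$ are real numbers, so the superdiagonal of $\mathbf{S}$ reads $\beta_1,\ldots,\beta_{\ell-2}$ and the subdiagonal reads $\beta_{\ell-2},\ldots,\beta_1$. Suppose $\beta_k\beta_{\ell-k-1}>0$ for all $1\le k\le \ell-2$ and $\beta\beta'>0$. Then all eigenvalues of $\mathbf{C}$ are real. *)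

theory Defs
  imports Complex_Main "Jordan_Normal_Form.Char_Poly"
begin

end

theory Submission imports Defs begin

lemma weighted_sym_real_eig:
  fixes C :: "real mat" and w :: "nat \<Rightarrow> real" and z :: complex
  assumes C: "C \<in> carrier_mat n n" and wpos: "\<And>i. i < n \<Longrightarrow> w i > 0"
    and wsym: "\<And>i j. i < n \<Longrightarrow> j < n \<Longrightarrow> w i * C$$(i,j) = w j * C$$(j,i)"
    and ev: "eigenvalue (map_mat complex_of_real C) z"
  shows "Im z = 0"
proof -
  let ?A = "map_mat complex_of_real C"
  from ev obtain v where v: "v \<in> carrier_vec n" "v \<noteq> 0\<^sub>v n" "?A *\<^sub>v v = z \<cdot>\<^sub>v v"
    unfolding eigenvalue_def eigenvector_def using C by auto
  have Av: "(?A *\<^sub>v v) $ i = (\<Sum>j<n. complex_of_real (C$$(i,j)) * v$j)" if "i < n" for i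
    using that C v(1) by (auto simp: scalar_prod_def row_def lessThan_atLeast0)
  define Q where "Q = (\<Sum>i<n. complex_of_real (w i) * cnj (v$i) * (?A *\<^sub>v v)$i)"
  define N where "N = (\<Sum>i<n. w i * (cmod (v$i))^2)"
  have "Q = (\<Sum>i<n. complex_of_real (w i) * cnj (v$i) * (z * v$i))"
    unfolding Q_def using v(1,3) by (intro sum.cong) auto
  also have "\<dots> = z * complex_of_real N"
    unfolding N_def of_real_sum sum_distrib_left
    by (intro sum.cong refl) (simp add: complex_norm_square[symmetric] mult_ac)
  finally have QN: "Q = z * complex_of_real N" .
  have Q2: "Q = (\<Sum>i<n. \<Sum>j<n. complex_of_real (w i * C$$(i,j)) * (cnj (v$i) * v$j))"
    unfolding Q_def by (intro sum.cong) (auto simp: Av sum_distrib_left mult_ac)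
  have "cnj Q = (\<Sum>i<n. \<Sum>j<n. complex_of_real (w i * C$$(i,j)) * (v$i * cnj (v$j)))"
    unfolding Q2 by (simp add: mult_ac)
  also have "\<dots> = (\<Sum>j<n. \<Sum>i<n. complex_of_real (w i * C$$(i,j)) * (v$i * cnj (v$j)))"
    by (rule sum.swap)
  also have "\<dots> = (\<Sum>j<n. \<Sum>i<n. complex_of_real (w j * C$$(j,i)) * (cnj (v$j) * v$i))"
    by (intro sum.cong refl) (simp add: wsym mult_ac)
  also have "\<dots> = Q" unfolding Q2 ..
  finally have "Im Q = 0" by (metis Reals_cnj_iff complex_is_Real_iff)
  hence "Im z * N = 0" using QN by simp
  moreover have "N > 0"
  proof -
    from v(1,2) obtain i where i: "i < n" "v$i \<noteq> 0" by (auto simp: vec_eq_iff)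
    have "w i * (cmod (v$i))^2 > 0" using wpos[OF i(1)] i(2) by simp
    moreover have "w i * (cmod (v$i))^2 \<le> N" unfolding N_def
      using i(1) wpos by (intro member_le_sum) (auto simp: less_imp_le)
    ultimately show ?thesis by linarith
  qed
  ultimately show ?thesis by simp
qed
theorem lemmaA2:
  fixes l :: nat and C :: "real mat"
    and \<alpha> \<beta> \<beta>' :: real and a b :: "nat \<Rightarrow> real"
  assumes l3: "l \<ge> 3"
    and dimC: "C \<in> carrier_mat l l"
    and C00: "C $$ (0, 0) = \<alpha>"
    and row0: "C $$ (0, 1) = \<beta>'" "C $$ (0, l - 1) = \<beta>'"
      "\<forall>j. 1 < j \<and> j < l - 1 \<longrightarrow> C $$ (0, j) = 0"
    and col0: "C $$ (1, 0) = \<beta>" "C $$ (l - 1, 0) = \<beta>"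
      "\<forall>i. 1 < i \<and> i < l - 1 \<longrightarrow> C $$ (i, 0) = 0"
    and diag: "\<forall>k. 1 \<le> k \<and> k \<le> l - 1 \<longrightarrow> C $$ (k, k) = a k"
    and diag_sym: "\<forall>k. 1 \<le> k \<and> k \<le> l - 1 \<longrightarrow> a k = a (l - k)"
    and offdiag: "\<forall>k. 1 \<le> k \<and> k \<le> l - 2 \<longrightarrow>
        C $$ (k, k + 1) = b k \<and> C $$ (k + 1, k) = b (l - 1 - k)"
    and tridiag: "\<forall>i j. 1 \<le> i \<and> i < l \<and> 1 \<le> j \<and> j < l \<and> (i + 1 < j \<or> j + 1 < i)
        \<longrightarrow> C $$ (i, j) = 0"
    and bpos: "\<forall>k. 1 \<le> k \<and> k \<le> l - 2 \<longrightarrow> b k * b (l - k - 1) > 0"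
    and \<beta>pos: "\<beta> * \<beta>' > 0"
  shows "\<forall>z::complex. eigenvalue (map_mat complex_of_real C) z \<longrightarrow> Im z = 0"
proof -
  have cdim: "dim_row C = l" "dim_col C = l" using dimC by auto
  define r where "r j = C$$(j,j+1) / C$$(j+1,j)" for j
  define w where "w k = (\<Prod>j<k. r j)" for k
  have prodpos: "C$$(j,j+1) * C$$(j+1,j) > 0" if "j + 1 < l" for j
  proof (cases "j = 0")
    case True thus ?thesis using row0 col0 \<beta>pos by (simp add: mult.commute)
  next
    case False
    hence "1 \<le> j \<and> j \<le> l - 2" using that by auto
    moreover have "l - 1 - j = l - j - 1" by simp
    ultimately show ?thesis using offdiag bpos by metis
  qed
  have rpos: "r j > 0" if "j + 1 < l" for j
    using prodpos[OF that] unfolding r_def by (auto simp: zero_less_mult_iff zero_less_divide_iff)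
  have wpos: "w i > 0" if "i < l" for i
    unfolding w_def using that rpos by (intro prod_pos) auto
  have step: "w i * C$$(i,i+1) = w (i+1) * C$$(i+1,i)" if "i + 1 < l" for i
  proof -
    have "C$$(i+1,i) \<noteq> 0" using prodpos[OF that] by auto
    thus ?thesis unfolding w_def r_def by simp
  qed
  have bnz: "b k \<noteq> 0" if "1 \<le> k" "k \<le> l - 2" for k
    using bpos that by fastforce
  have cyc: "w 0 * C$$(0, l-1) = w (l-1) * C$$(l-1, 0)"
  proof -
    have "{..<l-1} = {0..l-2}" using l3 by auto
    hence "w (l-1) = r 0 * (\<Prod>j=1..l-2. r j)" unfolding w_def
      using l3 by (simp add: prod.atLeast_Suc_atMost)
    also have "(\<Prod>j=1..l-2. r j) = (\<Prod>j=1..l-2. b j / b (l-1-j))"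
    proof (intro prod.cong refl)
      fix j assume "j \<in> {1..l-2}"
      thus "r j = b j / b (l-1-j)" unfolding r_def using offdiag by auto
    qed
    also have "\<dots> = (\<Prod>j=1..l-2. b j) / (\<Prod>j=1..l-2. b (l-1-j))"
      by (rule prod_dividef)
    also have "(\<Prod>j=1..l-2. b (l-1-j)) = (\<Prod>j=1..l-2. b j)"
      using prod.atLeastAtMost_rev[of b 1 "l-2"] l3
      proof -
        have "l - 2 + 1 - j = l - 1 - j" for j using l3 by simp
        thus ?thesis using prod.atLeastAtMost_rev[of b 1 "l-2"] by simp
      qed
    also have "(\<Prod>j=1..l-2. b j) \<noteq> 0" using bnz by auto
    hence "(\<Prod>j=1..l-2. b j) / (\<Prod>j=1..l-2. b j) = 1" by simp
    finally have "w (l-1) = r 0" by simp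
    moreover have "\<beta> \<noteq> 0" using \<beta>pos by auto
    ultimately show ?thesis using row0 col0 unfolding r_def w_def by simp
  qed
  have zero: "C$$(i,j) = 0 \<and> C$$(j,i) = 0" if "i + 1 < j" "j < l" "\<not> (i = 0 \<and> j = l - 1)" for i j
  proof (cases "i = 0")
    case True thus ?thesis using that row0(3) col0(3) by auto
  next
    case False thus ?thesis using that tridiag by auto
  qed
  have lt: "w i * C$$(i,j) = w j * C$$(j,i)" if ij: "i < j" "j < l" for i j
  proof -
    consider "j = i + 1" | "i + 1 < j" "i = 0 \<and> j = l - 1" | "i + 1 < j" "\<not> (i = 0 \<and> j = l - 1)"
      using ij by linarith
    thus ?thesis
    proof cases
      case 1 thus ?thesis using step ij by auto
    next
      case 2 thus ?thesis using cyc by auto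
    next
      case 3 thus ?thesis using zero[OF 3(1) ij(2) 3(2)] by simp
    qed
  qed
  have wsym: "w i * C$$(i,j) = w j * C$$(j,i)" if "i < l" "j < l" for i j
    using lt[of i j] lt[of j i] that by (cases i j rule: linorder_cases) auto
  show ?thesis
    using weighted_sym_real_eig[OF dimC wpos wsym] by blast
qed

end
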